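(* In the continuous-time scaled model described in the context, assume $x^N_0+y^N_0=T$ for all $N$. Let $\hat S_N=N^{1/4}(T-\mathcal N^N_{\tau_N})$ and $S_N=N^{1/4}(T-\tau_N)$. Then $$E\big[|\hat S_N-S_N|^2\big]\le T\,N^{-1/2}.$$ Consequently, if one of the families $(\hat S_N)_{N>0}$, $(S_N)_{N>0}$ converges in distribution to a random variable $S$, then so does the other.
   Context: Continuous-time model: $(X_t,Y_t)_{t\ge0}$ is a pure-jump Markov process with nonnegative integer values. Jumps occur at the times of a rate-one Poisson process $(\mathcal N_t)$. At a jump time $t'$, with $q=X_{t'-}/(X_{t'-}+Y_{t'-})$: with probability $q$, $Y$ decreases by $1$; with probability $1-q$, $X$ decreases by $1$. The process is stopped when one coordinate reaches $0$. Scaling: $x^N_t=N^{-1}X_{Nt}$, $y^N_t=N^{-1}Y_{Nt}$, $\mathcal N^N_t=N^{-1}\mathcal N_{Nt}$; the scaled ruin time is $\tau_N=\inf\{t>0: x^N_t\wedge y^N_t=0\}$ (so $\tau_N\le T$). *)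

theory Defs
  imports "HOL-Probability.Probability"
begin

text \<open>Randomness: holding times E k (i.i.d. Exp(1)) generate the rate-one Poisson
  clock; U k (i.i.d. uniform on [0,1]) decide the direction of the k-th jump.\<close>

text \<open>Time of the k-th jump of the Poisson clock (jumps numbered 1,2,...).\<close>
definition jump_time :: "(nat \<Rightarrow> 'a \<Rightarrow> real) \<Rightarrow> nat \<Rightarrow> 'a \<Rightarrow> real" where
  "jump_time E k \<omega> = (\<Sum>i<k. E i \<omega>)"

definition poisson_count :: "(nat \<Rightarrow> 'a \<Rightarrow> real) \<Rightarrow> real \<Rightarrow> 'a \<Rightarrow> nat" where
  "poisson_count E t \<omega> = card {k. 1 \<le> k \<and> jump_time E k \<omega> \<le> t}"

fun jump_chain :: "nat \<Rightarrow> nat \<Rightarrow> (nat \<Rightarrow> 'a \<Rightarrow> real) \<Rightarrow> nat \<Rightarrow> 'a \<Rightarrow> nat \<times> nat" where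
  "jump_chain X0 Y0 U 0 \<omega> = (X0, Y0)"
| "jump_chain X0 Y0 U (Suc k) \<omega> =
     (let (x, y) = jump_chain X0 Y0 U k \<omega> in
      if x = 0 \<or> y = 0 then (x, y)
      else if U k \<omega> < real x / real (x + y) then (x, y - 1) else (x - 1, y))"

definition proc_X :: "nat \<Rightarrow> nat \<Rightarrow> (nat \<Rightarrow> 'a \<Rightarrow> real) \<Rightarrow> (nat \<Rightarrow> 'a \<Rightarrow> real) \<Rightarrow> real \<Rightarrow> 'a \<Rightarrow> nat" where
  "proc_X X0 Y0 E U t \<omega> = fst (jump_chain X0 Y0 U (poisson_count E t \<omega>) \<omega>)"

definition proc_Y :: "nat \<Rightarrow> nat \<Rightarrow> (nat \<Rightarrow> 'a \<Rightarrow> real) \<Rightarrow> (nat \<Rightarrow> 'a \<Rightarrow> real) \<Rightarrow> real \<Rightarrow> 'a \<Rightarrow> nat" where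
  "proc_Y X0 Y0 E U t \<omega> = snd (jump_chain X0 Y0 U (poisson_count E t \<omega>) \<omega>)"

definition scaled_x :: "nat \<Rightarrow> nat \<Rightarrow> nat \<Rightarrow> (nat \<Rightarrow> 'a \<Rightarrow> real) \<Rightarrow> (nat \<Rightarrow> 'a \<Rightarrow> real) \<Rightarrow> real \<Rightarrow> 'a \<Rightarrow> real" where
  "scaled_x N X0 Y0 E U t \<omega> = real (proc_X X0 Y0 E U (real N * t) \<omega>) / real N"

definition scaled_y :: "nat \<Rightarrow> nat \<Rightarrow> nat \<Rightarrow> (nat \<Rightarrow> 'a \<Rightarrow> real) \<Rightarrow> (nat \<Rightarrow> 'a \<Rightarrow> real) \<Rightarrow> real \<Rightarrow> 'a \<Rightarrow> real" where
  "scaled_y N X0 Y0 E U t \<omega> = real (proc_Y X0 Y0 E U (real N * t) \<omega>) / real N"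

definition scaled_count :: "nat \<Rightarrow> (nat \<Rightarrow> 'a \<Rightarrow> real) \<Rightarrow> real \<Rightarrow> 'a \<Rightarrow> real" where
  "scaled_count N E t \<omega> = real (poisson_count E (real N * t) \<omega>) / real N"

definition ruin_time :: "nat \<Rightarrow> nat \<Rightarrow> nat \<Rightarrow> (nat \<Rightarrow> 'a \<Rightarrow> real) \<Rightarrow> (nat \<Rightarrow> 'a \<Rightarrow> real) \<Rightarrow> 'a \<Rightarrow> real" where
  "ruin_time N X0 Y0 E U \<omega> =
     Inf {t. 0 < t \<and> min (scaled_x N X0 Y0 E U t \<omega>) (scaled_y N X0 Y0 E U t \<omega>) = 0}"

end

theory Submission
  imports Defs
begin



lemma jensen_sq:
  fixes g :: "'a \<Rightarrow> real"
  assumes "prob_space M" "integrable M g" "integrable M (\<lambda>x. (g x)^2)"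
  shows "(integral\<^sup>L M g)^2 \<le> integral\<^sup>L M (\<lambda>x. (g x)^2)"
proof -
  interpret prob_space M by fact
  have "variance g = expectation (\<lambda>x. (g x)^2) - (expectation g)^2"
    using variance_eq[OF assms(2) assms(3)] by simp
  moreover have "0 \<le> variance g" by (intro integral_nonneg_AE) auto
  ultimately show ?thesis by simp
qed

lemma slutsky_L2:
  fixes M :: "'a measure" and A B :: "nat \<Rightarrow> 'a \<Rightarrow> real" and c :: "nat \<Rightarrow> real"
  assumes P: "prob_space M" and mA[measurable]: "\<And>n. A n \<in> borel_measurable M"
    and mB[measurable]: "\<And>n. B n \<in> borel_measurable M"
    and mu: "real_distribution \<mu>"
    and bnd: "\<And>n. n > 0 \<Longrightarrow> (\<integral>\<^sup>+\<omega>. ennreal ((A n \<omega> - B n \<omega>)^2) \<partial>M) \<le> ennreal (c n)"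
    and c0: "\<And>n. 0 \<le> c n" and cl: "c \<longlonglongrightarrow> 0"
    and wA: "weak_conv_m (\<lambda>n. distr M borel (A n)) \<mu>"
  shows "weak_conv_m (\<lambda>n. distr M borel (B n)) \<mu>"
proof -
  interpret prob_space M by fact
  have rdA: "real_distribution (distr M borel (A n))" for n
    unfolding real_distribution_def real_distribution_axioms_def
    by (auto intro!: prob_space_distr)
  have rdB: "real_distribution (distr M borel (B n))" for n
    unfolding real_distribution_def real_distribution_axioms_def
    by (auto intro!: prob_space_distr)
  show ?thesis
  proof (rule integral_cts_step_conv_imp_weak_conv[OF rdB mu])
    fix x y :: real assume xy: "x < y"
    define f where "f = cts_step x y"
    define L where "L = 1 / (y - x)"
    have L0: "0 < L" using xy by (simp add: L_def)
    have fb: "0 \<le> f z \<and> f z \<le> 1" for z using xy by (auto simp: f_def cts_step_def field_simps)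
    have fc: "isCont f z" for z
      unfolding f_def
      by (rule continuous_on_interior[of UNIV], rule uniformly_continuous_imp_continuous,
          rule cts_step_uniformly_continuous[OF xy]) auto
    have fm[measurable]: "f \<in> borel_measurable borel"
      by (intro borel_measurable_continuous_onI continuous_at_imp_continuous_on) (auto simp: fc)
    have fcl: "f z = max 0 (min 1 ((y - z) / (y - x)))" for z
      using xy unfolding f_def cts_step_def by (auto simp: field_simps)
    have clip: "\<bar>max 0 (min 1 u) - max 0 (min 1 v)\<bar> \<le> \<bar>u - v\<bar>" for u v :: real
      by (auto simp: max_def min_def)
    have flip: "\<bar>f a - f b\<bar> \<le> L * \<bar>a - b\<bar>" for a b
    proof -
      have "\<bar>f a - f b\<bar> \<le> \<bar>(y - a) / (y - x) - (y - b) / (y - x)\<bar>"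
        unfolding fcl by (rule clip)
      also have "(y - a) / (y - x) - (y - b) / (y - x) = (b - a) / (y - x)"
        by (simp add: diff_divide_distrib)
      also have "\<bar>(b - a) / (y - x)\<bar> = L * \<bar>a - b\<bar>"
        using xy by (simp add: L_def abs_minus_commute)
      finally show ?thesis .
    qed
    have hA: "(\<lambda>n. integral\<^sup>L (distr M borel (A n)) f) \<longlonglongrightarrow> integral\<^sup>L \<mu> f"
      using weak_conv_imp_integral_bdd_continuous_conv[OF rdA mu wA, of f 1] fc fb by auto
    define g where "g n \<omega> = \<bar>f (B n \<omega>) - f (A n \<omega>)\<bar>" for n \<omega>
    have gm[measurable]: "g n \<in> borel_measurable M" for n unfolding g_def by measurable
    have gb: "0 \<le> g n \<omega> \<and> g n \<omega> \<le> 1" for n \<omega> using fb[of "B n \<omega>"] fb[of "A n \<omega>"]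
      by (auto simp: g_def)
    have gi: "integrable M (g n)" for n
      by (rule integrable_const_bound[of _ 1]) (use gb in auto)
    have gi2: "integrable M (\<lambda>\<omega>. (g n \<omega>)^2)" for n
      by (rule integrable_const_bound[of _ 1]) (use gb in \<open>auto simp: abs_square_le_1\<close>)
    define e where "e n = integral\<^sup>L M (g n)" for n
    have e0: "0 \<le> e n" for n unfolding e_def by (intro integral_nonneg_AE) (use gb in auto)
    have esq: "(e n)^2 \<le> L^2 * c n" if "n > 0" for n
    proof -
      have "(e n)^2 \<le> integral\<^sup>L M (\<lambda>\<omega>. (g n \<omega>)^2)"
        unfolding e_def by (rule jensen_sq[OF P gi gi2])
      also have "\<dots> \<le> L^2 * c n"
      proof (rule integral_real_bounded)
        show "0 \<le> L^2 * c n" using c0 by simp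
        have "(\<integral>\<^sup>+\<omega>. ennreal ((g n \<omega>)^2) \<partial>M) \<le> (\<integral>\<^sup>+\<omega>. ennreal (L^2) * ennreal ((A n \<omega> - B n \<omega>)^2) \<partial>M)"
        proof (rule nn_integral_mono)
          fix \<omega>
          have "(g n \<omega>)^2 \<le> (L * \<bar>B n \<omega> - A n \<omega>\<bar>)^2"
            using flip[of "B n \<omega>" "A n \<omega>"] gb[of n \<omega>] unfolding g_def
            by (intro power_mono) auto
          also have "\<dots> = L^2 * (A n \<omega> - B n \<omega>)^2" by (simp add: power_mult_distrib power2_abs power2_commute)
          finally show "ennreal ((g n \<omega>)^2) \<le> ennreal (L^2) * ennreal ((A n \<omega> - B n \<omega>)^2)"
            by (simp add: ennreal_mult[symmetric])
        qed
        also have "\<dots> = ennreal (L^2) * (\<integral>\<^sup>+\<omega>. ennreal ((A n \<omega> - B n \<omega>)^2) \<partial>M)"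
          by (rule nn_integral_cmult) measurable
        also have "\<dots> \<le> ennreal (L^2) * ennreal (c n)"
          by (intro mult_left_mono bnd that) auto
        also have "\<dots> = ennreal (L^2 * c n)" by (rule ennreal_mult[symmetric]) (auto simp: c0)
        finally show "(\<integral>\<^sup>+\<omega>. ennreal ((g n \<omega>)^2) \<partial>M) \<le> ennreal (L^2 * c n)" .
      qed
      finally show ?thesis .
    qed
    have "(\<lambda>n. (e n)^2) \<longlonglongrightarrow> 0"
    proof (rule tendsto_sandwich[of "\<lambda>n. 0" _ _ "\<lambda>n. L^2 * c n"])
      show "\<forall>\<^sub>F n in sequentially. 0 \<le> (e n)^2" by simp
      show "\<forall>\<^sub>F n in sequentially. (e n)^2 \<le> L^2 * c n"
        using esq by (intro eventually_sequentiallyI[of 1]) auto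
      show "(\<lambda>n. L^2 * c n) \<longlonglongrightarrow> 0" using tendsto_mult_right_zero[OF cl] by simp
    qed simp
    then have "(\<lambda>n. sqrt ((e n)^2)) \<longlonglongrightarrow> sqrt 0" by (rule tendsto_real_sqrt)
    then have el: "e \<longlonglongrightarrow> 0" using e0 by simp
    have dl: "(\<lambda>n. integral\<^sup>L M (\<lambda>\<omega>. f (B n \<omega>)) - integral\<^sup>L M (\<lambda>\<omega>. f (A n \<omega>))) \<longlonglongrightarrow> 0"
    proof (rule Lim_null_comparison[OF _ el])
      show "\<forall>\<^sub>F n in sequentially. norm (integral\<^sup>L M (\<lambda>\<omega>. f (B n \<omega>)) - integral\<^sup>L M (\<lambda>\<omega>. f (A n \<omega>))) \<le> e n"
      proof (intro always_eventually allI)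
        fix n
        have iB: "integrable M (\<lambda>\<omega>. f (B n \<omega>))" by (rule integrable_const_bound[of _ 1]) (use fb in auto)
        have iA: "integrable M (\<lambda>\<omega>. f (A n \<omega>))" by (rule integrable_const_bound[of _ 1]) (use fb in auto)
        have "integral\<^sup>L M (\<lambda>\<omega>. f (B n \<omega>)) - integral\<^sup>L M (\<lambda>\<omega>. f (A n \<omega>)) = integral\<^sup>L M (\<lambda>\<omega>. f (B n \<omega>) - f (A n \<omega>))"
          using iA iB by simp
        also have "norm \<dots> \<le> integral\<^sup>L M (\<lambda>\<omega>. norm (f (B n \<omega>) - f (A n \<omega>)))"
          by (rule integral_norm_bound)
        finally show "norm (integral\<^sup>L M (\<lambda>\<omega>. f (B n \<omega>)) - integral\<^sup>L M (\<lambda>\<omega>. f (A n \<omega>))) \<le> e n"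
          by (simp add: e_def g_def[abs_def])
      qed
    qed
    have hA': "(\<lambda>n. integral\<^sup>L M (\<lambda>\<omega>. f (A n \<omega>))) \<longlonglongrightarrow> integral\<^sup>L \<mu> f"
      using hA by (simp add: integral_distr)
    have "(\<lambda>n. (integral\<^sup>L M (\<lambda>\<omega>. f (B n \<omega>)) - integral\<^sup>L M (\<lambda>\<omega>. f (A n \<omega>))) + integral\<^sup>L M (\<lambda>\<omega>. f (A n \<omega>))) \<longlonglongrightarrow> 0 + integral\<^sup>L \<mu> f"
      by (rule tendsto_add[OF dl hA'])
    then show "(\<lambda>n. integral\<^sup>L (distr M borel (B n)) (cts_step x y)) \<longlonglongrightarrow> integral\<^sup>L \<mu> (cts_step x y)"
      by (simp add: integral_distr f_def[symmetric])
  qed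
qed




definition stp :: "nat \<Rightarrow> nat \<Rightarrow> (nat \<Rightarrow> 'a \<Rightarrow> real) \<Rightarrow> nat \<Rightarrow> 'a \<Rightarrow> bool" where
  "stp X0 Y0 U k \<omega> \<longleftrightarrow> fst (jump_chain X0 Y0 U k \<omega>) = 0 \<or> snd (jump_chain X0 Y0 U k \<omega>) = 0"

lemma jc_Suc_stp: "stp X0 Y0 U k \<omega> \<Longrightarrow> jump_chain X0 Y0 U (Suc k) \<omega> = jump_chain X0 Y0 U k \<omega>"
  by (cases "jump_chain X0 Y0 U k \<omega>") (auto simp: stp_def)

lemma stp_mono:
  assumes "stp X0 Y0 U k \<omega>" "k \<le> m"
  shows "stp X0 Y0 U m \<omega> \<and> jump_chain X0 Y0 U m \<omega> = jump_chain X0 Y0 U k \<omega>"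
  using assms(2,1)
proof (induction m rule: dec_induct)
  case base then show ?case by simp
next
  case (step m) then show ?case using jc_Suc_stp[of X0 Y0 U m \<omega>] by (simp add: stp_def)
qed

lemma stp0_const: "stp X0 Y0 U 0 \<omega> \<Longrightarrow> jump_chain X0 Y0 U k \<omega> = (X0, Y0)"
  using stp_mono[of X0 Y0 U 0 \<omega> k] by simp

lemma not_stp_sum: "\<not> stp X0 Y0 U k \<omega> \<Longrightarrow>
   fst (jump_chain X0 Y0 U k \<omega>) + snd (jump_chain X0 Y0 U k \<omega>) + k = X0 + Y0"
proof (induction k)
  case 0 then show ?case by simp
next
  case (Suc k)
  have ns: "\<not> stp X0 Y0 U k \<omega>" using Suc.prems stp_mono[of X0 Y0 U k \<omega> "Suc k"] by auto
  obtain x y where xy: "jump_chain X0 Y0 U k \<omega> = (x, y)" by fastforce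
  have "x \<noteq> 0" "y \<noteq> 0" using ns xy by (auto simp: stp_def)
  then have js: "jump_chain X0 Y0 U (Suc k) \<omega> = (if U k \<omega> < real x / real (x + y) then (x, y - 1) else (x - 1, y))"
    using xy by simp
  have ih: "x + y + k = X0 + Y0" using Suc.IH[OF ns] xy by simp
  show ?case
  proof (cases "U k \<omega> < real x / real (x + y)")
    case True then show ?thesis using js ih \<open>y \<noteq> 0\<close> by simp
  next
    case False then show ?thesis using js ih \<open>x \<noteq> 0\<close> by simp
  qed
qed

lemma stp_end: "stp X0 Y0 U (X0 + Y0) \<omega>"
proof (rule ccontr)
  assume a: "\<not> stp X0 Y0 U (X0 + Y0) \<omega>"
  from not_stp_sum[OF a] have "fst (jump_chain X0 Y0 U (X0 + Y0) \<omega>) = 0" by simp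
  with a show False by (simp add: stp_def)
qed

lemma jc_meas[measurable]:
  assumes [measurable]: "\<And>k. U k \<in> borel_measurable M"
  shows "(\<lambda>\<omega>. jump_chain X0 Y0 U k \<omega>) \<in> measurable M (count_space UNIV)"
proof (induction k)
  case 0 then show ?case by simp
next
  case (Suc k)
  define F where "F s \<omega> = (if fst s = 0 \<or> snd s = 0 then s
      else if U k \<omega> < real (fst s) / real (fst s + snd s) then (fst s, snd s - 1) else (fst s - 1, snd s))"
    for s :: "nat \<times> nat" and \<omega>
  have pu: "Measurable.pred M (\<lambda>\<omega>. U k \<omega> < c)" for c :: real by measurable
  have ifm: "(\<lambda>\<omega>. if U k \<omega> < c then a else b) \<in> measurable M (count_space UNIV)"
    for c :: real and a b :: "nat \<times> nat"
    using pu[of c] by (intro measurable_If) auto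
  have Fm: "(\<lambda>\<omega>. F s \<omega>) \<in> measurable M (count_space UNIV)" for s
  proof (cases "fst s = 0 \<or> snd s = 0")
    case True
    then have "(\<lambda>\<omega>. F s \<omega>) = (\<lambda>_. s)" unfolding F_def by (intro ext) simp
    then show ?thesis by simp
  next
    case False
    then have "(\<lambda>\<omega>. F s \<omega>) = (\<lambda>\<omega>. if U k \<omega> < real (fst s) / real (fst s + snd s)
        then (fst s, snd s - 1) else (fst s - 1, snd s))" unfolding F_def by (intro ext) simp
    then show ?thesis by (simp only: ifm)
  qed
  have "(\<lambda>\<omega>. F (jump_chain X0 Y0 U k \<omega>) \<omega>) \<in> measurable M (count_space UNIV)"
    by (rule measurable_compose_countable'[OF Fm Suc]) simp
  moreover have "(\<lambda>\<omega>. F (jump_chain X0 Y0 U k \<omega>) \<omega>) = (\<lambda>\<omega>. jump_chain X0 Y0 U (Suc k) \<omega>)"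
    by (rule ext) (simp add: F_def Let_def case_prod_beta)
  ultimately show ?case by simp
qed

lemma stp_meas[measurable]:
  assumes [measurable]: "\<And>k. U k \<in> borel_measurable M"
  shows "Measurable.pred M (stp X0 Y0 U k)"
proof -
  have "(\<lambda>\<omega>. (\<lambda>s. fst s = 0 \<or> snd s = 0) (jump_chain X0 Y0 U k \<omega>)) \<in> measurable M (count_space UNIV)"
    by (rule measurable_compose[OF jc_meas]) auto
  then show ?thesis unfolding stp_def[abs_def] by simp
qed

lemma jt_meas[measurable]:
  assumes [measurable]: "\<And>k. E k \<in> borel_measurable M"
  shows "jump_time E k \<in> borel_measurable M"
  unfolding jump_time_def[abs_def] by measurable

lemma pc_meas:
  assumes [measurable]: "\<And>k. E k \<in> borel_measurable M" and [measurable]: "g \<in> borel_measurable M"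
  shows "(\<lambda>\<omega>. poisson_count E (g \<omega>) \<omega>) \<in> measurable M (count_space UNIV)"
  unfolding poisson_count_def
proof (rule measurable_card)
  fix i
  have "Measurable.pred M (\<lambda>x. 1 \<le> i \<and> jump_time E i x \<le> g x)" by measurable
  then show "{x \<in> space M. i \<in> {k. 1 \<le> k \<and> jump_time E k x \<le> g x}} \<in> sets M"
    by (simp add: pred_def)
qed




lemma ruined_iff:
  assumes "0 < N"
  shows "min (scaled_x N X0 Y0 E U t \<omega>) (scaled_y N X0 Y0 E U t \<omega>) = 0 \<longleftrightarrow>
         stp X0 Y0 U (poisson_count E (real N * t) \<omega>) \<omega>"
proof -
  have "min (real a / real N) (real b / real N) = 0 \<longleftrightarrow> a = 0 \<or> b = 0" for a b :: nat
    using assms by (cases "a \<le> b") (auto simp: min_def divide_le_0_iff divide_le_cancel)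
  then show ?thesis
    unfolding scaled_x_def scaled_y_def proc_X_def proc_Y_def stp_def by simp
qed

lemma ruin_time_eq:
  assumes "0 < N"
  shows "ruin_time N X0 Y0 E U \<omega> = Inf {t. 0 < t \<and> stp X0 Y0 U (poisson_count E (real N * t) \<omega>) \<omega>}"
  unfolding ruin_time_def by (simp add: ruined_iff[OF assms])

definition hpt :: "nat \<Rightarrow> (nat \<Rightarrow> 'a \<Rightarrow> real) \<Rightarrow> nat + rat \<Rightarrow> 'a \<Rightarrow> real" where
  "hpt N E i \<omega> = (case i of Inl k \<Rightarrow> jump_time E k \<omega> / real N | Inr q \<Rightarrow> of_rat q)"

lemma rat_between:
  fixes a b :: real assumes "a < b" shows "\<exists>q. a < of_rat q \<and> of_rat q < b"
proof -
  obtain r where "r \<in> \<rat>" "a < r" "r < b" using Rats_dense_in_real[OF assms] by blast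
  then show ?thesis by (auto elim!: Rats_cases)
qed

lemma key_point:
  assumes N: "0 < N"
    and t: "0 < t" "stp X0 Y0 U (poisson_count E (real N * t) \<omega>) \<omega>"
  shows "\<exists>i. 0 < hpt N E i \<omega> \<and> stp X0 Y0 U (poisson_count E (real N * hpt N E i \<omega>) \<omega>) \<omega>
            \<and> hpt N E i \<omega> \<le> t"
proof (cases "poisson_count E (real N * t) \<omega> = 0")
  case True
  with t have s0: "stp X0 Y0 U 0 \<omega>" by simp
  obtain q where q: "0 < (of_rat q :: real)" "(of_rat q :: real) < t" using rat_between[OF t(1)] by blast
  have "stp X0 Y0 U (poisson_count E (real N * of_rat q) \<omega>) \<omega>"
    using stp_mono[OF s0] by simp
  then show ?thesis using q by (intro exI[of _ "Inr q"]) (simp add: hpt_def)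
next
  case False
  define A where "A = {k. 1 \<le> k \<and> jump_time E k \<omega> \<le> real N * t}"
  have cA: "poisson_count E (real N * t) \<omega> = card A" by (simp add: A_def poisson_count_def)
  with False have finA: "finite A" and neA: "A \<noteq> {}" by (auto intro: card_ge_0_finite)
  show ?thesis
  proof (cases "\<exists>k\<in>A. jump_time E k \<omega> = real N * t")
    case True
    then obtain k where k: "jump_time E k \<omega> = real N * t" by blast
    have "hpt N E (Inl k) \<omega> = t" using N k by (simp add: hpt_def)
    then show ?thesis using t by (intro exI[of _ "Inl k"]) simp
  next
    case False
    define m where "m = Max ((\<lambda>k. jump_time E k \<omega>) ` A)"
    have mA: "jump_time E k \<omega> \<le> m" if "k \<in> A" for k
      using finA that by (auto simp: m_def)
    have "m \<in> (\<lambda>k. jump_time E k \<omega>) ` A" unfolding m_def using finA neA by (intro Max_in) auto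
    then have mlt: "m < real N * t" using False by (auto simp: A_def)
    have "max (m / real N) 0 < t" using mlt N t by (auto simp: field_simps)
    then obtain q where q: "max (m / real N) 0 < of_rat q" "(of_rat q :: real) < t"
      using rat_between by blast
    have "{k. 1 \<le> k \<and> jump_time E k \<omega> \<le> real N * of_rat q} = A"
    proof (intro set_eqI iffI)
      fix k assume k: "k \<in> A"
      have "m < real N * of_rat q" using q N by (auto simp: field_simps)
      then show "k \<in> {k. 1 \<le> k \<and> jump_time E k \<omega> \<le> real N * of_rat q}"
        using mA[OF k] k by (auto simp: A_def)
    next
      fix k assume "k \<in> {k. 1 \<le> k \<and> jump_time E k \<omega> \<le> real N * of_rat q}"
      moreover have "real N * of_rat q \<le> real N * t" using q N by auto
      ultimately show "k \<in> A" by (auto simp: A_def)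
    qed
    then have "poisson_count E (real N * of_rat q) \<omega> = poisson_count E (real N * t) \<omega>"
      by (simp add: poisson_count_def A_def)
    then show ?thesis using q t by (intro exI[of _ "Inr q"]) (simp add: hpt_def)
  qed
qed

lemma ruin_Inf_eq:
  assumes N: "0 < N"
  shows "ruin_time N X0 Y0 E U \<omega> = Inf ((\<lambda>i. hpt N E i \<omega>) `
     {i. 0 < hpt N E i \<omega> \<and> stp X0 Y0 U (poisson_count E (real N * hpt N E i \<omega>) \<omega>) \<omega>})"
proof -
  define R where "R = {t. 0 < t \<and> stp X0 Y0 U (poisson_count E (real N * t) \<omega>) \<omega>}"
  define R' where "R' = (\<lambda>i. hpt N E i \<omega>) `
     {i. 0 < hpt N E i \<omega> \<and> stp X0 Y0 U (poisson_count E (real N * hpt N E i \<omega>) \<omega>) \<omega>}"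
  have sub: "R' \<subseteq> R" by (auto simp: R_def R'_def)
  have bR: "bdd_below R" unfolding R_def by (rule bdd_belowI[of _ 0]) auto
  have bR': "bdd_below R'" using bdd_below_mono[OF bR sub] .
  have ex: "\<exists>a\<in>R'. a \<le> b" if "b \<in> R" for b
    using key_point[OF N, of b X0 Y0 U E \<omega>] that by (auto simp: R_def R'_def)
  have "Inf R = Inf R'"
  proof (cases "R = {}")
    case True then have "R' = {}" using sub by auto
    with True show ?thesis by simp
  next
    case False
    then have ne: "R' \<noteq> {}" using ex by blast
    show ?thesis
    proof (rule antisym)
      show "Inf R \<le> Inf R'" by (rule cInf_superset_mono[OF ne bR sub])
      show "Inf R' \<le> Inf R" by (rule cInf_mono[OF False bR' ex])
    qed
  qed
  moreover have "ruin_time N X0 Y0 E U \<omega> = Inf R" by (simp add: ruin_time_eq[OF N] R_def)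
  ultimately show ?thesis by (simp add: R'_def)
qed

lemma hpt_meas[measurable]:
  assumes [measurable]: "\<And>k. E k \<in> borel_measurable M"
  shows "hpt N E i \<in> borel_measurable M"
  by (cases i) (simp_all add: hpt_def[abs_def])

lemma stp_pc_meas:
  assumes [measurable]: "\<And>k. E k \<in> borel_measurable M" "\<And>k. U k \<in> borel_measurable M"
    and [measurable]: "g \<in> borel_measurable M"
  shows "Measurable.pred M (\<lambda>\<omega>. stp X0 Y0 U (poisson_count E (g \<omega>) \<omega>) \<omega>)"
proof -
  have A: "\<And>c. (\<lambda>\<omega>. stp X0 Y0 U c \<omega>) \<in> measurable M (count_space UNIV)"
    using stp_meas[of U M X0 Y0] by (simp add: pred_def)
  have B: "(\<lambda>\<omega>. poisson_count E (g \<omega>) \<omega>) \<in> measurable M (count_space UNIV)"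
    by (rule pc_meas) measurable
  have "(\<lambda>\<omega>. stp X0 Y0 U (poisson_count E (g \<omega>) \<omega>) \<omega>) \<in> measurable M (count_space UNIV)"
    by (rule measurable_compose_countable'[OF A B]) simp
  then show ?thesis by (simp add: pred_def)
qed

lemma ruin_meas:
  assumes mE[measurable]: "\<And>k. E k \<in> borel_measurable M" and mU[measurable]: "\<And>k. U k \<in> borel_measurable M"
    and N: "0 < N"
  shows "(\<lambda>\<omega>. ruin_time N X0 Y0 E U \<omega>) \<in> borel_measurable M"
proof -
  define P where "P i \<omega> \<longleftrightarrow> 0 < hpt N E i \<omega> \<and> stp X0 Y0 U (poisson_count E (real N * hpt N E i \<omega>) \<omega>) \<omega>"
    for i \<omega>
  have Pm[measurable]: "Measurable.pred M (P i)" for i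
  proof -
    have "Measurable.pred M (\<lambda>\<omega>. stp X0 Y0 U (poisson_count E (real N * hpt N E i \<omega>) \<omega>) \<omega>)"
      by (rule stp_pc_meas) measurable
    then show ?thesis unfolding P_def[abs_def] by measurable
  qed
  have eq: "ruin_time N X0 Y0 E U \<omega> = Inf ((\<lambda>i. hpt N E i \<omega>) ` {i. P i \<omega>})" for \<omega>
    using ruin_Inf_eq[OF N] by (simp add: P_def)
  have lt: "Inf ((\<lambda>i. hpt N E i \<omega>) ` {i. P i \<omega>}) < a \<longleftrightarrow>
      (\<exists>i. P i \<omega> \<and> hpt N E i \<omega> < a) \<or> ((\<forall>i. \<not> P i \<omega>) \<and> Inf ({} :: real set) < a)" for \<omega> a
  proof (cases "\<exists>i. P i \<omega>")
    case True
    have bdd: "bdd_below ((\<lambda>i. hpt N E i \<omega>) ` {i. P i \<omega>})"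
      by (rule bdd_belowI[of _ 0]) (auto simp: P_def)
    show ?thesis using True by (subst cInf_less_iff[OF _ bdd]) auto
  next
    case False then show ?thesis by simp
  qed
  show ?thesis
    unfolding eq
  proof (rule borel_measurable_iff_less[THEN iffD2], intro allI)
    fix a :: real
    have "Measurable.pred M (\<lambda>\<omega>. (\<exists>i. P i \<omega> \<and> hpt N E i \<omega> < a) \<or> ((\<forall>i. \<not> P i \<omega>) \<and> Inf ({} :: real set) < a))"
      by measurable
    then show "{w \<in> space M. Inf ((\<lambda>i. hpt N E i w) ` {i. P i w}) < a} \<in> sets M"
      by (simp add: lt pred_def)
  qed
qed




definition KK :: "nat \<Rightarrow> nat \<Rightarrow> (nat \<Rightarrow> 'a \<Rightarrow> real) \<Rightarrow> 'a \<Rightarrow> nat" where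
  "KK X0 Y0 U \<omega> = (LEAST k. stp X0 Y0 U k \<omega>)"

lemma KK_stp: "stp X0 Y0 U (KK X0 Y0 U \<omega>) \<omega>"
  unfolding KK_def by (rule LeastI[of _ "X0 + Y0"]) (rule stp_end)

lemma KK_le: "KK X0 Y0 U \<omega> \<le> X0 + Y0"
  unfolding KK_def by (rule Least_le) (rule stp_end)

lemma KK_not: "k < KK X0 Y0 U \<omega> \<Longrightarrow> \<not> stp X0 Y0 U k \<omega>"
  unfolding KK_def by (rule not_less_Least)

lemma jt_strict:
  assumes pos: "\<And>i. 0 < E i \<omega>" and "k < j"
  shows "jump_time E k \<omega> < jump_time E j \<omega>"
  using assms(2)
proof (induction j rule: less_induct)
  case (less j)
  then obtain j' where j: "j = Suc j'" by (cases j) auto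
  have "jump_time E j \<omega> = jump_time E j' \<omega> + E j' \<omega>" by (simp add: j jump_time_def)
  moreover have "jump_time E k \<omega> \<le> jump_time E j' \<omega>"
    using less.IH[of j'] less.prems j by (cases "k = j'") (auto simp: less_Suc_eq)
  ultimately show ?case using pos[of j'] by simp
qed

lemma jt_mono:
  assumes pos: "\<And>i. 0 < E i \<omega>" and "k \<le> j"
  shows "jump_time E k \<omega> \<le> jump_time E j \<omega>"
  using jt_strict[of E \<omega> k j, OF pos] assms(2) by (cases "k = j") auto

lemma jt0: "jump_time E 0 \<omega> = 0" by (simp add: jump_time_def)

lemma pc_jt:
  assumes pos: "\<And>i. 0 < E i \<omega>"
  shows "poisson_count E (jump_time E k \<omega>) \<omega> = k"
proof -
  have "{j. 1 \<le> j \<and> jump_time E j \<omega> \<le> jump_time E k \<omega>} = {1..k}"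
  proof (intro set_eqI iffI)
    fix j assume "j \<in> {j. 1 \<le> j \<and> jump_time E j \<omega> \<le> jump_time E k \<omega>}"
    then show "j \<in> {1..k}" using jt_strict[of E \<omega> k j, OF pos] by (auto simp: not_le[symmetric])
  qed (auto intro: jt_mono[of E \<omega>, OF pos])
  then show ?thesis by (simp add: poisson_count_def)
qed

lemma good_ruin:
  assumes pos: "\<And>i. 0 < E i \<omega>" and N: "0 < N"
  shows "ruin_time N X0 Y0 E U \<omega> = jump_time E (KK X0 Y0 U \<omega>) \<omega> / real N"
    and "poisson_count E (real N * ruin_time N X0 Y0 E U \<omega>) \<omega> = KK X0 Y0 U \<omega>"
proof -
  define K where "K = KK X0 Y0 U \<omega>"
  define R where "R = {t. 0 < t \<and> stp X0 Y0 U (poisson_count E (real N * t) \<omega>) \<omega>}"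
  have rt: "ruin_time N X0 Y0 E U \<omega> = Inf R" by (simp add: ruin_time_eq[OF N] R_def)
  have "Inf R = jump_time E K \<omega> / real N"
  proof (cases "K = 0")
    case True
    then have s0: "stp X0 Y0 U 0 \<omega>" using KK_stp[of X0 Y0 U \<omega>] by (simp add: K_def)
    have "R = {0<..}" using stp_mono[OF s0] by (auto simp: R_def)
    then show ?thesis using True by (simp add: jt0)
  next
    case False
    have Jpos: "0 < jump_time E K \<omega>" using jt_strict[of E \<omega> 0 K, OF pos] False by (simp add: jt0)
    show ?thesis
    proof (rule cInf_eq_minimum)
      have "real N * (jump_time E K \<omega> / real N) = jump_time E K \<omega>" using N by simp
      then show "jump_time E K \<omega> / real N \<in> R"
        using Jpos N KK_stp[of X0 Y0 U \<omega>] by (simp add: R_def pc_jt[of E \<omega>, OF pos] K_def)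
    next
      fix t assume t: "t \<in> R"
      show "jump_time E K \<omega> / real N \<le> t"
      proof (rule ccontr)
        assume "\<not> ?thesis"
        then have lt: "real N * t < jump_time E K \<omega>" using N by (simp add: field_simps)
        have "{j. 1 \<le> j \<and> jump_time E j \<omega> \<le> real N * t} \<subseteq> {1..<K}"
        proof
          fix j assume j: "j \<in> {j. 1 \<le> j \<and> jump_time E j \<omega> \<le> real N * t}"
          have "j < K"
          proof (rule ccontr)
            assume "\<not> j < K"
            then have "jump_time E K \<omega> \<le> jump_time E j \<omega>" by (intro jt_mono[of E \<omega>, OF pos]) auto
            with j lt show False by auto
          qed
          with j show "j \<in> {1..<K}" by auto
        qed
        then have "poisson_count E (real N * t) \<omega> \<le> card {1..<K}"
          unfolding poisson_count_def by (intro card_mono) auto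
        then have "poisson_count E (real N * t) \<omega> < K" using False by simp
        then have "\<not> stp X0 Y0 U (poisson_count E (real N * t) \<omega>) \<omega>" by (intro KK_not) (simp add: K_def)
        with t show False by (simp add: R_def)
      qed
    qed
  qed
  then show r: "ruin_time N X0 Y0 E U \<omega> = jump_time E (KK X0 Y0 U \<omega>) \<omega> / real N"
    using rt by (simp add: K_def)
  have "real N * (jump_time E K \<omega> / real N) = jump_time E K \<omega>" using N by simp
  then show "poisson_count E (real N * ruin_time N X0 Y0 E U \<omega>) \<omega> = KK X0 Y0 U \<omega>"
    by (simp add: r K_def[symmetric] pc_jt[of E \<omega>, OF pos])
qed




lemma jt_sq_int:
  fixes M :: "'a measure" and E :: "nat \<Rightarrow> 'a \<Rightarrow> real"
  assumes P: "prob_space M" and ind: "prob_space.indep_vars M (\<lambda>_. borel) E {..<k}"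
    and dist: "\<And>i. distributed M lborel (E i) (exponential_density 1)"
  shows "(\<integral>\<^sup>+\<omega>. ennreal ((jump_time E k \<omega> - real k)^2) \<partial>M) = ennreal (real k)"
proof (cases "k = 0")
  case True then show ?thesis by (simp add: jump_time_def)
next
  case False
  interpret prob_space M by fact
  define J where "J = jump_time E k"
  have D: "distributed M lborel J (erlang_density (k - 1) 1)"
    unfolding J_def jump_time_def[abs_def]
    using exponential_distributed_sum[where I="{..<k}" and X=E and l=1] ind dist False by (simp add: lessThan_empty_iff)
  have Jm[measurable]: "J \<in> borel_measurable M" using distributed_measurable[OF D] by simp
  have i1: "integrable M (\<lambda>x. J x ^ 1)" and i2: "integrable M (\<lambda>x. J x ^ 2)"
    using erlang_ith_moment_integrable[OF _ D, of 1] erlang_ith_moment_integrable[OF _ D, of 2] by auto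
  have e1: "expectation J = real k"
    using erlang_ith_moment[OF _ D, of 1] False by (simp add: fact_reduce[of k])
  have var: "variance J = real k"
    using erlang_distributed_variance[OF _ D] False by simp
  have eq: "(\<lambda>x. (J x - real k)^2) = (\<lambda>x. J x ^ 2 - 2 * real k * J x + (real k)^2)"
    by (simp add: power2_diff fun_eq_iff algebra_simps)
  have int: "integrable M (\<lambda>x. (J x - real k)^2)"
  proof -
    have "integrable M (\<lambda>x. (J x)^2 - (2 * real k) * J x)"
      using i1 i2 by (intro Bochner_Integration.integrable_diff integrable_mult_right) auto
    then have "integrable M (\<lambda>x. ((J x)^2 - (2 * real k) * J x) + (real k)^2)"
      by (intro Bochner_Integration.integrable_add) auto
    then show ?thesis unfolding eq by (simp add: algebra_simps)
  qed
  have "(\<integral>\<^sup>+\<omega>. ennreal ((J \<omega> - real k)^2) \<partial>M) = ennreal (integral\<^sup>L M (\<lambda>x. (J x - real k)^2))"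
    by (rule nn_integral_eq_integral[OF int]) auto
  also have "integral\<^sup>L M (\<lambda>x. (J x - real k)^2) = real k"
    using var e1 by simp
  finally show ?thesis by (simp add: J_def)
qed

lemma jc_cong:
  assumes "\<And>i. U i \<omega> = U' i \<omega>'"
  shows "jump_chain X0 Y0 U k \<omega> = jump_chain X0 Y0 U' k \<omega>'"
proof (induction k)
  case (Suc k)
  then show ?case using assms[of k] by (simp add: case_prod_beta Let_def)
qed simp

lemma KK_cong:
  assumes "\<And>i. U i \<omega> = U' i \<omega>'"
  shows "KK X0 Y0 U \<omega> = KK X0 Y0 U' \<omega>'"
  unfolding KK_def stp_def using jc_cong[of U \<omega> U' \<omega>', OF assms] by simp

lemma KK_meas[measurable]:
  assumes [measurable]: "\<And>k. U k \<in> borel_measurable M"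
  shows "KK X0 Y0 U \<in> measurable M (count_space UNIV)"
proof -
  have "\<And>i. (\<lambda>x. stp X0 Y0 U i x) \<in> measurable M (count_space UNIV)"
    using stp_meas[of U M X0 Y0] by (simp add: pred_def)
  then have "(\<lambda>x. LEAST i. stp X0 Y0 U i x) \<in> measurable M (count_space UNIV)"
    by (rule measurable_Least)
  then show ?thesis unfolding KK_def[abs_def] .
qed

lemma indep_E:
  fixes M :: "'a measure"
  assumes P: "prob_space M" and ind: "prob_space.indep_vars M (\<lambda>_. borel) (case_sum E U) UNIV"
  shows "prob_space.indep_vars M (\<lambda>_. borel) E I"
proof -
  interpret prob_space M by fact
  have "indep_vars (\<lambda>j. PiM {Inl j} (\<lambda>_. borel)) (\<lambda>j \<omega>. restrict (\<lambda>i. case_sum E U i \<omega>) {Inl j}) UNIV"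
    by (rule indep_vars_restrict[OF ind]) (auto simp: disjoint_family_on_def)
  then have "indep_vars (\<lambda>_. borel) (\<lambda>j \<omega>. (\<lambda>v. v (Inl j)) (restrict (\<lambda>i. case_sum E U i \<omega>) {Inl j})) UNIV"
    by (rule indep_vars_compose2) (rule measurable_component_singleton, simp)
  then have "indep_vars (\<lambda>_. borel) E UNIV"
    by (simp add: fun_eq_iff)
  then show ?thesis by (rule indep_vars_subset) simp
qed

lemma indep_term:
  fixes M :: "'a measure"
  assumes P: "prob_space M" and ind: "prob_space.indep_vars M (\<lambda>_. borel) (case_sum E U) UNIV"
  shows "(\<integral>\<^sup>+\<omega>. ennreal ((if KK X0 Y0 U \<omega> = k then 1 else 0) * (jump_time E k \<omega> - real k)^2) \<partial>M)
    = (\<integral>\<^sup>+\<omega>. ennreal (if KK X0 Y0 U \<omega> = k then 1 else 0) \<partial>M) * (\<integral>\<^sup>+\<omega>. ennreal ((jump_time E k \<omega> - real k)^2) \<partial>M)"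
proof -
  interpret prob_space M by fact
  define A where "A = range (Inr :: nat \<Rightarrow> nat + nat)"
  define B where "B = range (Inl :: nat \<Rightarrow> nat + nat)"
  have iv: "indep_var (PiM A (\<lambda>_. borel)) (\<lambda>\<omega>. restrict (\<lambda>i. case_sum E U i \<omega>) A)
                    (PiM B (\<lambda>_. borel)) (\<lambda>\<omega>. restrict (\<lambda>i. case_sum E U i \<omega>) B)"
    by (rule indep_var_restrict[OF ind]) (auto simp: A_def B_def)
  define Y1 where "Y1 u = (if KK X0 Y0 (\<lambda>i v. v (Inr i)) u = k then 1 else 0 :: real)" for u :: "nat + nat \<Rightarrow> real"
  define Y2 where "Y2 v = ((\<Sum>i<k. v (Inl i)) - real k)^2" for v :: "nat + nat \<Rightarrow> real"
  have cU: "(\<lambda>v. v (Inr i)) \<in> borel_measurable (PiM A (\<lambda>_. borel))" for i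
    by (rule measurable_component_singleton) (simp add: A_def)
  have m1: "Y1 \<in> borel_measurable (PiM A (\<lambda>_. borel))"
  proof -
    have "KK X0 Y0 (\<lambda>i v. v (Inr i)) \<in> measurable (PiM A (\<lambda>_. borel)) (count_space UNIV)"
      by (rule KK_meas) (rule cU)
    then show ?thesis unfolding Y1_def[abs_def] by measurable
  qed
  have m2: "Y2 \<in> borel_measurable (PiM B (\<lambda>_. borel))"
  proof -
    have "(\<lambda>v. v (Inl i)) \<in> borel_measurable (PiM B (\<lambda>_. borel))" for i
      by (rule measurable_component_singleton) (simp add: B_def)
    then show ?thesis unfolding Y2_def[abs_def] by measurable
  qed
  have iv2: "indep_var borel (Y1 \<circ> (\<lambda>\<omega>. restrict (\<lambda>i. case_sum E U i \<omega>) A))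
                       borel (Y2 \<circ> (\<lambda>\<omega>. restrict (\<lambda>i. case_sum E U i \<omega>) B))"
    by (rule indep_var_compose[OF iv m1 m2])
  have e1: "Y1 \<circ> (\<lambda>\<omega>. restrict (\<lambda>i. case_sum E U i \<omega>) A) = (\<lambda>\<omega>. if KK X0 Y0 U \<omega> = k then 1 else 0)"
  proof (rule ext)
    fix \<omega>
    have "KK X0 Y0 (\<lambda>i v. v (Inr i)) (restrict (\<lambda>i. case_sum E U i \<omega>) A) = KK X0 Y0 U \<omega>"
      by (rule KK_cong) (simp add: A_def)
    then show "(Y1 \<circ> (\<lambda>\<omega>. restrict (\<lambda>i. case_sum E U i \<omega>) A)) \<omega> = (if KK X0 Y0 U \<omega> = k then 1 else 0)"
      by (simp add: Y1_def)
  qed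
  have e2: "Y2 \<circ> (\<lambda>\<omega>. restrict (\<lambda>i. case_sum E U i \<omega>) B) = (\<lambda>\<omega>. (jump_time E k \<omega> - real k)^2)"
    by (rule ext) (simp add: Y2_def B_def jump_time_def)
  define X where "X = case_bool (\<lambda>\<omega>. if KK X0 Y0 U \<omega> = k then 1 else 0 :: real) (\<lambda>\<omega>. (jump_time E k \<omega> - real k)^2)"
  have iX: "indep_vars (\<lambda>_. borel) X UNIV"
  proof -
    have "indep_vars (case_bool borel borel) X UNIV"
      using iv2 unfolding indep_var_def e1 e2 X_def .
    moreover have "case_bool borel borel = (\<lambda>_::bool. borel :: real measure)" by (rule ext) (simp split: bool.split)
    ultimately show ?thesis by metis
  qed
  have iX': "indep_vars (\<lambda>_. borel) (\<lambda>i \<omega>. ennreal (X i \<omega>)) UNIV"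
    by (rule indep_vars_compose2[OF iX]) measurable
  have "(\<integral>\<^sup>+\<omega>. (\<Prod>i\<in>UNIV. ennreal (X i \<omega>)) \<partial>M) = (\<Prod>i\<in>UNIV. \<integral>\<^sup>+\<omega>. ennreal (X i \<omega>) \<partial>M)"
  proof (rule indep_vars_nn_integral)
    show "indep_vars (\<lambda>_. borel) (\<lambda>i \<omega>. ennreal (X i \<omega>)) UNIV" by (rule iX')
  qed auto
  then show ?thesis by (simp add: UNIV_bool X_def mult.commute ennreal_mult')
qed

lemma main_bound:
  fixes M :: "'a measure"
  assumes P: "prob_space M" and ind: "prob_space.indep_vars M (\<lambda>_. borel) (case_sum E U) UNIV"
    and dist: "\<And>i. distributed M lborel (E i) (exponential_density 1)"
    and mE[measurable]: "\<And>k. E k \<in> borel_measurable M" and mU[measurable]: "\<And>k. U k \<in> borel_measurable M"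
  shows "(\<integral>\<^sup>+\<omega>. ennreal ((jump_time E (KK X0 Y0 U \<omega>) \<omega> - real (KK X0 Y0 U \<omega>))^2) \<partial>M)
           \<le> ennreal (real (X0 + Y0))"
proof -
  interpret prob_space M by fact
  define n where "n = X0 + Y0"
  define I where "I k \<omega> = (if KK X0 Y0 U \<omega> = k then 1 else 0 :: real)" for k \<omega>
  define f where "f k \<omega> = (jump_time E k \<omega> - real k)^2" for k \<omega>
  have Km[measurable]: "KK X0 Y0 U \<in> measurable M (count_space UNIV)" by (rule KK_meas) (rule mU)
  have Im[measurable]: "I k \<in> borel_measurable M" for k unfolding I_def[abs_def] by measurable
  have fm[measurable]: "f k \<in> borel_measurable M" for k unfolding f_def[abs_def] by measurable
  have pw: "ennreal ((jump_time E (KK X0 Y0 U \<omega>) \<omega> - real (KK X0 Y0 U \<omega>))^2)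
      = (\<Sum>k\<in>{..n}. ennreal (I k \<omega> * f k \<omega>))" for \<omega>
  proof -
    have "(\<Sum>k\<in>{..n}. ennreal (I k \<omega> * f k \<omega>)) = (\<Sum>k\<in>{..n}. if KK X0 Y0 U \<omega> = k then ennreal (f k \<omega>) else 0)"
      by (intro sum.cong) (auto simp: I_def)
    also have "\<dots> = ennreal (f (KK X0 Y0 U \<omega>) \<omega>)"
      using KK_le[of X0 Y0 U \<omega>] by (simp add: n_def)
    finally show ?thesis by (simp add: f_def)
  qed
  have one: "(\<Sum>k\<in>{..n}. ennreal (I k \<omega>)) = 1" for \<omega>
  proof -
    have "(\<Sum>k\<in>{..n}. ennreal (I k \<omega>)) = (\<Sum>k\<in>{..n}. if KK X0 Y0 U \<omega> = k then 1 else 0)"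
      by (intro sum.cong) (auto simp: I_def)
    also have "\<dots> = 1" using KK_le[of X0 Y0 U \<omega>] by (simp add: n_def)
    finally show ?thesis .
  qed
  have fk: "(\<integral>\<^sup>+\<omega>. ennreal (f k \<omega>) \<partial>M) = ennreal (real k)" for k
    unfolding f_def by (rule jt_sq_int[OF P indep_E[OF P ind] dist])
  have "(\<integral>\<^sup>+\<omega>. ennreal ((jump_time E (KK X0 Y0 U \<omega>) \<omega> - real (KK X0 Y0 U \<omega>))^2) \<partial>M)
       = (\<Sum>k\<in>{..n}. \<integral>\<^sup>+\<omega>. ennreal (I k \<omega> * f k \<omega>) \<partial>M)"
    unfolding pw by (rule nn_integral_sum) measurable
  also have "\<dots> = (\<Sum>k\<in>{..n}. (\<integral>\<^sup>+\<omega>. ennreal (I k \<omega>) \<partial>M) * ennreal (real k))"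
    by (intro sum.cong refl) (simp add: I_def f_def indep_term[OF P ind] fk[unfolded f_def])
  also have "\<dots> \<le> (\<Sum>k\<in>{..n}. (\<integral>\<^sup>+\<omega>. ennreal (I k \<omega>) \<partial>M) * ennreal (real n))"
    by (intro sum_mono mult_left_mono) auto
  also have "\<dots> = (\<Sum>k\<in>{..n}. \<integral>\<^sup>+\<omega>. ennreal (I k \<omega>) \<partial>M) * ennreal (real n)"
    by (simp add: sum_distrib_right)
  also have "(\<Sum>k\<in>{..n}. \<integral>\<^sup>+\<omega>. ennreal (I k \<omega>) \<partial>M) = (\<integral>\<^sup>+\<omega>. (\<Sum>k\<in>{..n}. ennreal (I k \<omega>)) \<partial>M)"
    by (rule nn_integral_sum[symmetric]) measurable
  also have "\<dots> = 1" unfolding one by (simp add: emeasure_space_1)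
  finally show ?thesis by (simp add: n_def)
qed




theorem mainTheorem12:
  fixes M :: "'a measure"
    and E U :: "nat \<Rightarrow> 'a \<Rightarrow> real"
    and X0 Y0 :: "nat \<Rightarrow> nat"
    and T :: real
    and \<mu> :: "real measure"
  assumes "prob_space M"
    and "prob_space.indep_vars M (\<lambda>_. borel) (case_sum E U) UNIV"
    and "\<And>k. distributed M lborel (E k) (exponential_density 1)"
    and "\<And>k. distributed M lborel (U k) (indicator {0..1})"
    and "\<And>N. 0 < N \<Longrightarrow> real (X0 N) / real N + real (Y0 N) / real N = T"
    and "real_distribution \<mu>"
  defines "Shat \<equiv> \<lambda>N \<omega>. real N powr (1/4) *
             (T - scaled_count N E (ruin_time N (X0 N) (Y0 N) E U \<omega>) \<omega>)"
    and "S \<equiv> \<lambda>N \<omega>. real N powr (1/4) * (T - ruin_time N (X0 N) (Y0 N) E U \<omega>)"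
  shows "(\<forall>N>0. (\<integral>\<^sup>+ \<omega>. ennreal ((Shat N \<omega> - S N \<omega>)\<^sup>2) \<partial>M)
                   \<le> ennreal (T * real N powr (-1/2)))
       \<and> (weak_conv_m (\<lambda>N. distr M borel (Shat N)) \<mu>
            \<longleftrightarrow> weak_conv_m (\<lambda>N. distr M borel (S N)) \<mu>)"
proof -
  note P = assms(1) and ind = assms(2) and dist = assms(3) and distU = assms(4) and XY = assms(5)
  interpret prob_space M by fact
  have mE[measurable]: "E k \<in> borel_measurable M" for k using distributed_measurable[OF dist[of k]] by simp
  have mU[measurable]: "U k \<in> borel_measurable M" for k using distributed_measurable[OF distU[of k]] by simp
  have pos1: "AE \<omega> in M. 0 < E i \<omega>" for i
  proof -
    have "\<P>(x in M. 0 < E i x) = 1"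
      using exponential_distributedD_gt[OF dist[of i], of 0] by simp
    from AE_prob_1[OF this] show ?thesis by auto
  qed
  have pos: "AE \<omega> in M. \<forall>i. 0 < E i \<omega>" using pos1 by (simp add: AE_all_countable)
  have T0: "0 \<le> T" using XY[of 1] by simp
  define c where "c N = T * real N powr (-1/2)" for N :: nat
  have bnd: "(\<integral>\<^sup>+ \<omega>. ennreal ((Shat N \<omega> - S N \<omega>)\<^sup>2) \<partial>M) \<le> ennreal (c N)" if N: "0 < N" for N
  proof -
    define K where "K \<omega> = KK (X0 N) (Y0 N) U \<omega>" for \<omega>
    define J where "J \<omega> = jump_time E (K \<omega>) \<omega>" for \<omega>
    define d where "d = real N powr (1/2) / (real N)^2"
    have d0: "0 \<le> d" by (simp add: d_def)
    have q: "(real N powr (1/4))^2 = real N powr (1/2)"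
      by (simp add: power2_eq_square powr_add[symmetric])
    have ae: "AE \<omega> in M. ennreal ((Shat N \<omega> - S N \<omega>)\<^sup>2) = ennreal d * ennreal ((J \<omega> - real (K \<omega>))^2)"
      using pos
    proof eventually_elim
      case (elim \<omega>)
      have r1: "ruin_time N (X0 N) (Y0 N) E U \<omega> = J \<omega> / real N"
        using good_ruin(1)[OF _ N, of E \<omega> "X0 N" "Y0 N" U] elim by (simp add: J_def K_def)
      have r2: "poisson_count E (real N * ruin_time N (X0 N) (Y0 N) E U \<omega>) \<omega> = K \<omega>"
        using good_ruin(2)[OF _ N, of E \<omega> "X0 N" "Y0 N" U] elim by (simp add: K_def)
      have "Shat N \<omega> - S N \<omega> = real N powr (1/4) * ((J \<omega> - real (K \<omega>)) / real N)"
        unfolding Shat_def S_def scaled_count_def using r1 r2 by (simp add: algebra_simps diff_divide_distrib)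
      then have "(Shat N \<omega> - S N \<omega>)^2 = d * (J \<omega> - real (K \<omega>))^2"
        by (simp add: power_mult_distrib power_divide q d_def)
      then show ?case using d0 by (simp add: ennreal_mult)
    qed
    have "(\<integral>\<^sup>+ \<omega>. ennreal ((Shat N \<omega> - S N \<omega>)\<^sup>2) \<partial>M) = (\<integral>\<^sup>+ \<omega>. ennreal d * ennreal ((J \<omega> - real (K \<omega>))^2) \<partial>M)"
      by (rule nn_integral_cong_AE[OF ae])
    also have "\<dots> = ennreal d * (\<integral>\<^sup>+ \<omega>. ennreal ((J \<omega> - real (K \<omega>))^2) \<partial>M)"
    proof (rule nn_integral_cmult)
      have "K \<in> measurable M (count_space UNIV)" unfolding K_def[abs_def] by (rule KK_meas) (rule mU)
      then have "J \<in> borel_measurable M"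
        unfolding J_def[abs_def] by (rule measurable_compose_countable'[OF jt_meas[OF mE]]) simp
      then show "(\<lambda>\<omega>. ennreal ((J \<omega> - real (K \<omega>))^2)) \<in> borel_measurable M"
        using \<open>K \<in> _\<close> by measurable
    qed
    also have "\<dots> \<le> ennreal d * ennreal (real (X0 N + Y0 N))"
      unfolding J_def K_def by (intro mult_left_mono main_bound[OF P ind dist mE mU]) auto
    also have "\<dots> = ennreal (d * real (X0 N + Y0 N))" using d0 by (simp add: ennreal_mult)
    also have "d * real (X0 N + Y0 N) = c N"
    proof -
      have TN: "T = real (X0 N + Y0 N) / real N" using XY[OF N] by (simp add: add_divide_distrib)
      have h: "real N powr (-1/2) * real N = real N powr (1/2)"
      proof -
        have "real N powr (-1/2) * real N powr 1 = real N powr (-1/2 + 1)" by (rule powr_add[symmetric])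
        then show ?thesis using N by simp
      qed
      have eq: "real N powr (-1/2) = real N powr (1/2) / real N" using h N by (simp add: field_simps)
      have "c N = real (X0 N + Y0 N) / real N * (real N powr (1/2) / real N)"
        unfolding c_def TN eq ..
      then show ?thesis by (simp add: d_def power2_eq_square)
    qed
    finally show ?thesis .
  qed
  have part1: "\<forall>N>0. (\<integral>\<^sup>+ \<omega>. ennreal ((Shat N \<omega> - S N \<omega>)\<^sup>2) \<partial>M) \<le> ennreal (T * real N powr (-1/2))"
    using bnd by (simp add: c_def)
  have mR: "(\<lambda>\<omega>. ruin_time N (X0 N) (Y0 N) E U \<omega>) \<in> borel_measurable M" if "0 < N" for N
    by (rule ruin_meas[OF mE mU that])
  have mS: "S N \<in> borel_measurable M" for N
  proof (cases "N = 0")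
    case True then show ?thesis by (simp add: S_def)
  next
    case False
    then have r[measurable]: "(\<lambda>\<omega>. ruin_time N (X0 N) (Y0 N) E U \<omega>) \<in> borel_measurable M" using mR by simp
    show ?thesis unfolding S_def by measurable
  qed
  have mShat: "Shat N \<in> borel_measurable M" for N
  proof (cases "N = 0")
    case True then show ?thesis by (simp add: Shat_def)
  next
    case False
    then have r[measurable]: "(\<lambda>\<omega>. ruin_time N (X0 N) (Y0 N) E U \<omega>) \<in> borel_measurable M" using mR by simp
    have pcm[measurable]: "(\<lambda>\<omega>. poisson_count E (real N * ruin_time N (X0 N) (Y0 N) E U \<omega>) \<omega>) \<in> measurable M (count_space UNIV)"
      by (rule pc_meas[OF mE]) measurable
    show ?thesis unfolding Shat_def scaled_count_def by measurable
  qed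
  have c0: "0 \<le> c N" for N using T0 by (simp add: c_def)
  have cl: "c \<longlonglongrightarrow> 0"
    unfolding c_def using tendsto_mult_right_zero[OF tendsto_neg_powr[OF _ filterlim_real_sequentially, of "-1/2"], of T]
    by simp
  have bnd': "(\<integral>\<^sup>+ \<omega>. ennreal ((S N \<omega> - Shat N \<omega>)\<^sup>2) \<partial>M) \<le> ennreal (c N)" if "0 < N" for N
    using bnd[OF that] by (simp add: power2_commute)
  have part2: "weak_conv_m (\<lambda>N. distr M borel (Shat N)) \<mu> \<longleftrightarrow> weak_conv_m (\<lambda>N. distr M borel (S N)) \<mu>"
  proof
    assume a: "weak_conv_m (\<lambda>N. distr M borel (Shat N)) \<mu>"
      note X = slutsky_L2[OF P mShat mS assms(6) bnd c0 cl]
      show "weak_conv_m (\<lambda>N. distr M borel (S N)) \<mu>" by (rule X) (auto simp: a)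
  next
    assume a: "weak_conv_m (\<lambda>N. distr M borel (S N)) \<mu>"
      note X = slutsky_L2[OF P mS mShat assms(6) bnd' c0 cl]
      show "weak_conv_m (\<lambda>N. distr M borel (Shat N)) \<mu>" by (rule X) (auto simp: a)
  qed
  show ?thesis using part1 part2 by blast
qed


end
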